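(* For $\alpha>0$ let $\mathcal{C}_\alpha=X_\alpha(\mathbb{R}^2)$ be as in the context. Then the curve $\mathcal{C}_\alpha\cap\{x_2=0\}$ converges uniformly to the origin as $\alpha\to+\infty$: $$\sup\{|x_1|+|x_3| : (x_1,0,x_3)\in\mathcal{C}_\alpha\}\to0\quad\text{as }\alpha\to+\infty.$$
   Context: $\mathrm{Nil}_3$ is $\mathbb{R}^3$ with the metric $dx_1^2+dx_2^2+\big(dx_3+\tfrac12(x_2dx_1-x_1dx_2)\big)^2$. For $\alpha>0$ and $\theta\in\mathbb{R}$ set $C_{\alpha,\theta}=\frac{\sin(2\theta)}{2\alpha}$ and $P_{\alpha,\theta}(x)=\alpha^2+\cos(2\theta)x^2-C_{\alpha,\theta}^2x^4$. Let $\theta^+_\alpha=\pi/2$ if $\alpha>1$, and $\theta^+_\alpha=\frac12\arccos(1-2\alpha^2)$ if $\alpha\le1$. Let $$L(\alpha,\theta)=\int_{-1}^1\frac{2\alpha C_{\alpha,\theta}^2x^2-\alpha\cos(2\theta)+C_{\alpha,\theta}^2x^2\sqrt{P_{\alpha,\theta}(x)}}{\sqrt{(1-x^2)P_{\alpha,\theta}(x)}(\alpha+\sqrt{P_{\alpha,\theta}(x)})}dx.$$ Let $\theta=\tilde\theta_\alpha$ be the unique $\theta\in(0,\theta^+_\alpha)\cap(0,\pi/4)$ with $L(\alpha,\theta)=0$, and $C=C_{\alpha,\theta}$. Let $\varphi$ solve $\varphi'^2=P_{\alpha,\theta}(\cos\varphi)$ with $\varphi(0)=0$ and $\varphi'(0)\le0$.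 Define $\beta'=C\cos^2\varphi$ with $\beta(0)=0$, and $G'=\frac{C^2\cos^2\varphi-\cos 2\theta}{\alpha-\varphi'}$ with $G(0)=0$. Put $A=\alpha v+\beta(u)$ and $X_\alpha(u,v)=(x_1,x_2,x_3)$ with $x_1=\frac{G'}{\alpha}\cos\varphi\sinh A-\frac C\alpha\sin\varphi\cosh A$, $x_2=Cv-G$, $x_3=-\frac{x_1x_2}2+\frac C\alpha(\frac{G'}{\alpha}-1)\cos\varphi\cosh A-\frac1\alpha(\frac{C^2}\alpha+G')\sin\varphi\sinh A$, where $\varphi,G,G'$ are evaluated at $u$. *)

theory Defs
  imports "HOL-Analysis.Analysis"
begin

definition Cc :: "real \<Rightarrow> real \<Rightarrow> real" where
  "Cc \<alpha> \<theta> = sin (2*\<theta>) / (2*\<alpha>)"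

definition Pp :: "real \<Rightarrow> real \<Rightarrow> real \<Rightarrow> real" where
  "Pp \<alpha> \<theta> x = \<alpha>^2 + cos (2*\<theta>) * x^2 - (Cc \<alpha> \<theta>)^2 * x^4"

definition theta_plus :: "real \<Rightarrow> real" where
  "theta_plus \<alpha> = (if \<alpha> > 1 then pi/2 else arccos (1 - 2*\<alpha>^2) / 2)"

definition Lint :: "real \<Rightarrow> real \<Rightarrow> real" where
  "Lint \<alpha> \<theta> = integral {-1..1} (\<lambda>x.
     (2*\<alpha>*(Cc \<alpha> \<theta>)^2*x^2 - \<alpha>*cos (2*\<theta>) + (Cc \<alpha> \<theta>)^2*x^2 * (sqrt (Pp \<alpha> \<theta> x)))
     / (sqrt ((1 - x^2) * Pp \<alpha> \<theta> x) * (\<alpha> + sqrt (Pp \<alpha> \<theta> x))))"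

definition theta_tilde :: "real \<Rightarrow> real" where
  "theta_tilde \<alpha> = (THE \<theta>. 0 < \<theta> \<and> \<theta> < theta_plus \<alpha> \<and> \<theta> < pi/4 \<and> Lint \<alpha> \<theta> = 0)"

definition Ct :: "real \<Rightarrow> real" where
  "Ct \<alpha> = Cc \<alpha> (theta_tilde \<alpha>)"

definition phi :: "real \<Rightarrow> real \<Rightarrow> real" where
  "phi \<alpha> = (THE f. \<exists>f'. f 0 = 0 \<and> f' 0 \<le> 0 \<and>
       (\<forall>u. (f has_real_derivative f' u) (at u)) \<and>
       (\<forall>u. (f' u)^2 = Pp \<alpha> (theta_tilde \<alpha>) (cos (f u))))"

definition dphi :: "real \<Rightarrow> real \<Rightarrow> real" where
  "dphi \<alpha> u = deriv (phi \<alpha>) u"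

definition prim :: "(real \<Rightarrow> real) \<Rightarrow> real \<Rightarrow> real" where
  "prim g = (THE F. F 0 = 0 \<and> (\<forall>u. (F has_real_derivative g u) (at u)))"

definition beta :: "real \<Rightarrow> real \<Rightarrow> real" where
  "beta \<alpha> = prim (\<lambda>u. Ct \<alpha> * (cos (phi \<alpha> u))^2)"

definition dG :: "real \<Rightarrow> real \<Rightarrow> real" where
  "dG \<alpha> u = ((Ct \<alpha>)^2 * (cos (phi \<alpha> u))^2 - cos (2 * theta_tilde \<alpha>)) / (\<alpha> - dphi \<alpha> u)"

definition G :: "real \<Rightarrow> real \<Rightarrow> real" where
  "G \<alpha> = prim (dG \<alpha>)"

definition X :: "real \<Rightarrow> real \<times> real \<Rightarrow> real \<times> real \<times> real" where
  "X \<alpha> uv = (let u = fst uv; v = snd uv; C = Ct \<alpha>; A = \<alpha> * v + beta \<alpha> u;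
      ph = phi \<alpha> u; g = G \<alpha> u; g' = dG \<alpha> u;
      x1 = g'/\<alpha> * cos ph * sinh A - C/\<alpha> * sin ph * cosh A;
      x2 = C * v - g;
      x3 = - (x1 * x2) / 2 + C/\<alpha> * (g'/\<alpha> - 1) * cos ph * cosh A
           - 1/\<alpha> * (C^2/\<alpha> + g') * sin ph * sinh A
    in (x1, x2, x3))"

definition Ccal :: "real \<Rightarrow> (real \<times> real \<times> real) set" where
  "Ccal \<alpha> = range (X \<alpha>)"

end

theory Submission
  imports Defs
begin


lemma antideriv_exists:
  fixes g :: "real \<Rightarrow> real" assumes cg: "continuous_on UNIV g"
  shows "\<exists>F. F 0 = 0 \<and> (\<forall>x. (F has_real_derivative g x) (at x))"
proof -
  define F where "F x = integral {0..x} g - integral {x..0} g" for x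
  have int: "g integrable_on {a..b}" for a b
    by (rule integrable_continuous_real) (rule continuous_on_subset[OF cg], auto)
  have rep: "F u = integral {a..u} g - integral {a..0} g" if "a \<le> u" "a \<le> 0" for a u
  proof (cases "0 \<le> u")
    case True
    have "integral {a..0} g + integral {0..u} g = integral {a..u} g"
      by (rule Henstock_Kurzweil_Integration.integral_combine) (use that True int in auto)
    moreover have "integral {u..0} g = 0"
      using True by (cases "u = 0") auto
    ultimately show ?thesis unfolding F_def by simp
  next
    case False
    have "integral {a..u} g + integral {u..0} g = integral {a..0} g"
      by (rule Henstock_Kurzweil_Integration.integral_combine) (use that False int in auto)
    moreover have "integral {0..u} g = 0"
      using False by auto
    ultimately show ?thesis unfolding F_def by simp
  qed
  have "(F has_real_derivative g x) (at x)" for x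
  proof -
    define a where "a = min 0 x - 1"
    define b where "b = x + 1"
    have d1: "((\<lambda>u. integral {a..u} g) has_real_derivative g x) (at x within {a..b})"
      by (rule integral_has_real_derivative) (auto simp: a_def b_def intro: continuous_on_subset[OF cg])
    have "at x within {a..b} = at x"
      by (rule at_within_Icc_at) (auto simp: a_def b_def)
    with d1 have d2: "((\<lambda>u. integral {a..u} g - integral {a..0} g) has_real_derivative g x) (at x)"
      by (auto intro!: derivative_eq_intros)
    show ?thesis
    proof (rule has_field_derivative_transform_within_open[OF d2, of "{a<..}"])
      show "x \<in> {a<..}" by (auto simp: a_def)
      fix u assume "u \<in> {a<..}"
      then show "integral {a..u} g - integral {a..0} g = F u"
        using rep[of a u] by (auto simp: a_def)
    qed auto
  qed
  moreover have "F 0 = 0" by (simp add: F_def)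
  ultimately show ?thesis by blast
qed

lemma deriv_zero_const:
  fixes f :: "real \<Rightarrow> real"
  assumes "\<And>x. (f has_real_derivative 0) (at x)"
  shows "f x = f y"
  using DERIV_isconst_all assms by blast

lemma prim_char:
  fixes g F :: "real \<Rightarrow> real"
  assumes "F 0 = 0" "\<And>u. (F has_real_derivative g u) (at u)"
  shows "prim g = F"
  unfolding prim_def
proof (rule the_equality)
  show "F 0 = 0 \<and> (\<forall>u. (F has_real_derivative g u) (at u))" using assms by auto
  fix H assume H: "H 0 = 0 \<and> (\<forall>u. (H has_real_derivative g u) (at u))"
  have "\<And>x. ((\<lambda>u. H u - F u) has_real_derivative 0) (at x)"
    using H assms by (auto intro!: derivative_eq_intros)
  then have "\<And>x. H x - F x = H 0 - F 0" by (rule deriv_zero_const)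
  then show "H = F" using H assms by (auto simp: fun_eq_iff)
qed

lemma prim_props:
  fixes g :: "real \<Rightarrow> real" assumes "continuous_on UNIV g"
  shows "prim g 0 = 0" "\<And>u. (prim g has_real_derivative g u) (at u)"
proof -
  obtain F where F: "F 0 = 0" "\<And>x. (F has_real_derivative g x) (at x)"
    using antideriv_exists[OF assms] by blast
  have "prim g = F" by (rule prim_char) (use F in auto)
  then show "prim g 0 = 0" "\<And>u. (prim g has_real_derivative g u) (at u)" using F by auto
qed




definition PP :: "real \<Rightarrow> real \<Rightarrow> real \<Rightarrow> real" where
  "PP a c y = a^2 + c*y - (1-c^2)*y^2/(4*a^2)"

definition FF :: "real \<Rightarrow> real \<Rightarrow> real \<Rightarrow> real" where
  "FF a c y = ((1-c^2)*y*(2*a + sqrt (PP a c y))/(4*a^2) - a*c) / (sqrt (PP a c y) * (a + sqrt (PP a c y)))"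

definition JJ :: "real \<Rightarrow> real \<Rightarrow> real" where
  "JJ a c = integral {0..pi} (\<lambda>t. FF a c ((cos t)^2))"

lemma PP_bounds:
  assumes "2 \<le> a" "0 \<le> c" "c \<le> 1" "0 \<le> y" "y \<le> 1"
  shows "(a-1)^2 \<le> PP a c y" "PP a c y \<le> (a+1)^2"
proof -
  have "(1-c^2)*y^2 \<le> 1" using assms by (simp add: mult_le_one power_le_one)
  moreover have "0 \<le> (1-c^2)*y^2" using assms by (simp add: power_le_one)
  moreover have "4*a^2 \<ge> 16" using assms power_mono[of 2 a 2] by auto
  ultimately have q: "0 \<le> (1-c^2)*y^2/(4*a^2)" "(1-c^2)*y^2/(4*a^2) \<le> 1"
    by (auto simp: divide_le_eq)
  have "0 \<le> c*y" "c*y \<le> 1" using assms by (auto simp: mult_le_one)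
  moreover define z where "z = (1-c^2)*y^2/(4*a^2)"
  moreover have "PP a c y = a^2 + c*y - z" by (simp add: PP_def z_def)
  moreover have "0 \<le> z" "z \<le> 1" using q by (auto simp: z_def)
  moreover have "(a-1)^2 = a^2 - 2*a + 1" "(a+1)^2 = a^2 + 2*a + 1" by algebra+
  ultimately show "(a-1)^2 \<le> PP a c y" "PP a c y \<le> (a+1)^2"
    using assms by linarith+
qed

lemma sqrtPP_bounds:
  assumes "2 \<le> a" "0 \<le> c" "c \<le> 1" "0 \<le> y" "y \<le> 1"
  shows "a - 1 \<le> sqrt (PP a c y)" "sqrt (PP a c y) \<le> a + 1" "0 < PP a c y"
proof -
  show "a - 1 \<le> sqrt (PP a c y)"
    using PP_bounds(1)[OF assms] assms real_le_rsqrt by auto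
  show "sqrt (PP a c y) \<le> a + 1"
    using PP_bounds(2)[OF assms] assms real_sqrt_le_mono[of "PP a c y" "(a+1)^2"] by auto
  show "0 < PP a c y"
  proof -
    have "1 \<le> (a-1)^2" using assms by (intro one_le_power) auto
    then show ?thesis using PP_bounds(1)[OF assms] by linarith
  qed
qed

lemma cont_FF_cos:
  assumes "2 \<le> a" "0 \<le> c" "c \<le> 1"
  shows "continuous_on S (\<lambda>t. FF a c ((cos t)^2))"
proof -
  have b: "1 \<le> sqrt (PP a c ((cos t)^2))" for t
    proof -
    have "(cos t)^2 \<le> 1" by (simp add: abs_square_le_1)
    then show ?thesis using sqrtPP_bounds(1)[OF assms, of "(cos t)^2"] assms zero_le_power2[of "cos t"] by linarith
  qed
  have cP: "continuous_on S (\<lambda>t. PP a c ((cos t)^2))"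
    unfolding PP_def using assms by (intro continuous_intros) auto
  show ?thesis unfolding FF_def
    apply (intro continuous_intros cP)
    using b assms by (auto simp: add_pos_pos) (smt (verit) b)+
qed

lemma Lint_eq:
  assumes a: "2 \<le> a" and c0: "0 \<le> cos (2*\<theta>)"
  shows "Lint a \<theta> = JJ a (cos (2*\<theta>))"
proof -
  define c where "c = cos (2*\<theta>)"
  have c: "0 \<le> c" "c \<le> 1" using c0 by (auto simp: c_def)
  define f where "f t = FF a c ((cos t)^2)" for t
  define g where "g x = arccos (-x)" for x :: real
  define g' where "g' x = 1 / sqrt (1 - x^2)" for x :: real
  have sub: "((\<lambda>x. g' x *\<^sub>R f (g x)) has_integral (integral {g (-1)..g 1} f)) {-1..1}"
  proof (rule has_integral_substitution_strong[where s="{-1,1}" and c=0 and d=pi])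
    show "g ` {-1..1} \<subseteq> {0..pi}" by (auto simp: g_def arccos_lbound arccos_ubound)
    show "continuous_on {0..pi} f" unfolding f_def by (rule cont_FF_cos[OF a c])
    show "continuous_on {-1..1} g" unfolding g_def by (intro continuous_intros) auto
    fix x :: real assume x: "x \<in> {-1..1} - {-1,1}"
    then have x': "-1 < -x" "-x < 1" by auto
    have "((\<lambda>x. arccos (-x)) has_real_derivative inverse (- sqrt (1 - (-x)\<^sup>2)) * (-1)) (at x)"
      using DERIV_chain2[OF DERIV_arccos[OF x'] DERIV_minus[OF DERIV_ident]] by simp
    then show "(g has_real_derivative g' x) (at x within {-1..1})"
      unfolding g_def g'_def by (auto intro: has_field_derivative_at_within simp: divide_inverse)
  qed (auto simp: g_def)
  have ga: "g (-1) = 0" "g 1 = pi" by (auto simp: g_def)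
  have eq: "(\<lambda>x. g' x *\<^sub>R f (g x)) x =
     (2*a*(Cc a \<theta>)^2*x^2 - a*cos (2*\<theta>) + (Cc a \<theta>)^2*x^2 * (sqrt (Pp a \<theta> x)))
     / (sqrt ((1 - x^2) * Pp a \<theta> x) * (a + sqrt (Pp a \<theta> x)))" if x: "x \<in> {-1..1}" for x
  proof -
    have cg: "cos (g x) = -x" using x by (auto simp: g_def cos_arccos)
    have C2: "(Cc a \<theta>)^2 = (1 - c^2)/(4*a^2)"
      by (simp add: Cc_def c_def power_divide sin_squared_eq power_mult_distrib)
    have P: "Pp a \<theta> x = PP a c (x^2)"
      unfolding Pp_def PP_def C2 by (simp add: c_def power2_eq_square power4_eq_xxxx)
    have n: "2*a*((1-c^2)/(4*a^2))*x^2 - a*c + (1-c^2)/(4*a^2)*x^2 * sqrt(PP a c (x^2))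
       = (1-c^2)*(x^2)*(2*a + sqrt(PP a c (x^2)))/(4*a^2) - a*c"
      using a by (simp add: field_simps power2_eq_square)
    show ?thesis
      unfolding P f_def cg g'_def FF_def C2 real_sqrt_mult c_def[symmetric] n
      by simp
  qed
  have "Lint a \<theta> = integral {-1..1} (\<lambda>x. g' x *\<^sub>R f (g x))"
    unfolding Lint_def by (rule integral_cong) (use eq in auto)
  also have "\<dots> = integral {0..pi} f" using sub ga by (simp add: integral_unique)
  finally show ?thesis unfolding JJ_def f_def c_def .
qed




lemma Q_mono:
  fixes a s1 s2 :: real
  assumes "0 < a" "0 < s1" "s1 \<le> s2"
  shows "(2*a+s2)/(s2*(a+s2)) \<le> (2*a+s1)/(s1*(a+s1))"
proof -
  have "s1*(a+s1)*(2*a+s2) \<le> s2*(a+s2)*(2*a+s1)"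
  proof -
    have "s2*(a+s2)*(2*a+s1) - s1*(a+s1)*(2*a+s2) = (s2-s1)*(2*a^2 + 2*a*(s1+s2) + s1* s2)"
      by (simp add: algebra_simps power2_eq_square)
    moreover have "0 \<le> (s2-s1)*(2*a^2 + 2*a*(s1+s2) + s1* s2)"
      using assms by (intro mult_nonneg_nonneg add_nonneg_nonneg) auto
    ultimately show ?thesis by linarith
  qed
  then show ?thesis using assms by (simp add: divide_simps) (simp add: algebra_simps)
qed

lemma PP_mono_c:
  assumes "2 \<le> a" "0 \<le> c1" "c1 \<le> c2" "c2 \<le> 1" "0 \<le> y" "y \<le> 1"
  shows "PP a c1 y \<le> PP a c2 y"
proof -
  have "c1*y \<le> c2*y" using assms by (simp add: mult_right_mono)
  moreover have "(1-c2^2)*y^2 \<le> (1-c1^2)*y^2"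
    using assms by (intro mult_right_mono) (auto simp: power_mono)
  then have "(1-c2^2)*y^2/(4*a^2) \<le> (1-c1^2)*y^2/(4*a^2)"
    by (simp add: divide_right_mono)
  ultimately show ?thesis unfolding PP_def by linarith
qed

lemma div_shuffle: fixes p q r d :: real shows "p*q/r/d = p*(q/d)/r"
  by (cases "d=0"; cases "r = 0"; simp add: field_simps)

lemma FF_split_gen:
  fixes a c y s :: real
  assumes "0 < a" "0 < s"
  shows "((1-c^2)*y*(2*a + s)/(4*a^2) - a*c) / (s * (a + s)) =
     (1-c^2)*y*((2*a + s)/(s*(a + s)))/(4*a^2) - a*c/(s*(a + s))"
  unfolding diff_divide_distrib div_shuffle ..

lemma FF_split:
  assumes "2 \<le> a" "0 \<le> c" "c \<le> 1" "0 \<le> y" "y \<le> 1"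
  shows "FF a c y = (1-c^2)*y*((2*a + sqrt (PP a c y))/(sqrt (PP a c y)*(a + sqrt (PP a c y))))/(4*a^2)
                    - a*c/(sqrt (PP a c y)*(a + sqrt (PP a c y)))"
proof -
  have "0 < sqrt (PP a c y)" using sqrtPP_bounds(3)[OF assms] by simp
  then show ?thesis using assms unfolding FF_def by (intro FF_split_gen) auto
qed

lemma FF_strict_mono:
  assumes a: "2 \<le> a" and c: "0 < c1" "c1 < c2" "c2 \<le> 1" and y: "0 \<le> y" "y \<le> 1"
  shows "FF a c2 y < FF a c1 y"
proof -
  define P1 where "P1 = PP a c1 y"
  define P2 where "P2 = PP a c2 y"
  define s1 where "s1 = sqrt P1"
  define s2 where "s2 = sqrt P2"
  have c1': "0 \<le> c1" "c1 \<le> 1" using c by auto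
  have c2': "0 \<le> c2" "c2 \<le> 1" using c by auto
  have P1: "0 < P1" using sqrtPP_bounds(3)[OF a c1' y] by (simp add: P1_def)
  have P2: "0 < P2" using sqrtPP_bounds(3)[OF a c2' y] by (simp add: P2_def)
  have s1: "0 < s1" "s1^2 = P1" using P1 by (auto simp: s1_def)
  have s2: "0 < s2" "s2^2 = P2" using P2 by (auto simp: s2_def)
  have P12: "P1 \<le> P2" unfolding P1_def P2_def using PP_mono_c[OF a c1'(1) _ c2'(2) y] c by simp
  have s12: "s1 \<le> s2" unfolding s1_def s2_def using P12 by simp
  define Q1 where "Q1 = (2*a + s1)/(s1*(a+s1))"
  define Q2 where "Q2 = (2*a + s2)/(s2*(a+s2))"
  have Q12: "Q2 \<le> Q1" unfolding Q1_def Q2_def using Q_mono[of a s1 s2] a s1 s12 by simp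
  have Q2pos: "0 \<le> Q2" unfolding Q2_def using s2 a by simp
  have cc: "1 - c2^2 \<le> 1 - c1^2" using c by (simp add: power_strict_mono less_imp_le)
  have c2sq: "0 \<le> 1 - c2^2" using c2' by (simp add: power_le_one)
  have T2: "(1-c2^2)*y*Q2/(4*a^2) \<le> (1-c1^2)*y*Q1/(4*a^2)"
  proof -
    have "(1-c2^2)*y*Q2 \<le> (1-c1^2)*y*Q1"
      by (intro mult_mono mult_right_mono) (use cc c2sq y Q12 Q2pos in auto)
    then show ?thesis by (simp add: divide_right_mono)
  qed
  define w where "w = y^2/(4*a^2)"
  have w: "0 \<le> w" "w \<le> 1/16"
  proof -
    have "y^2 \<le> 1" using y by (simp add: power_le_one)
    moreover have "16 \<le> 4*a^2" using a power_mono[of 2 a 2] by auto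
    ultimately show "w \<le> 1/16" unfolding w_def by (simp add: divide_simps)
  qed (simp add: w_def)
  have PPw: "PP a c y = (a^2 - w) + c*y + c^2*w" for c
    unfolding PP_def w_def using a by (simp add: field_simps)
  have key1: "P2*c1 < P1*c2"
  proof -
    have "P1*c2 - P2*c1 = (c2-c1)*((a^2 - w) - w*c1*c2)"
      unfolding P1_def P2_def PPw by (simp add: algebra_simps power2_eq_square)
    moreover have "w*c1*c2 \<le> 1/16"
    proof -
      have "c1*c2 \<le> 1" using c by (simp add: mult_le_one)
      then have "w*(c1*c2) \<le> (1/16)*1" using w c by (intro mult_mono) auto
      then show ?thesis by (simp add: mult.assoc)
    qed
    moreover have "4 \<le> a^2" using a power_mono[of 2 a 2] by auto
    ultimately have "0 < a^2 - w - w*c1*c2" using w by linarith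
    then have "0 < (c2-c1)*((a^2 - w) - w*c1*c2)" using c by (intro mult_pos_pos) auto
    with \<open>P1*c2 - P2*c1 = _\<close> have "0 < P1*c2 - P2*c1" by simp
    then show ?thesis by simp
  qed
  have key2: "s2*c1 < s1*c2"
  proof -
    have "P2*c1^2 < P1*c2^2"
    proof -
      have "P2*c1*c1 < P1*c2*c1" using key1 c by (simp add: mult_strict_right_mono)
      also have "\<dots> \<le> P1*c2*c2" using P1 c by (intro mult_left_mono) auto
      finally show ?thesis by (simp add: power2_eq_square mult.assoc)
    qed
    then have "sqrt (P2*c1^2) < sqrt (P1*c2^2)" by simp
    then show ?thesis using c unfolding s1_def s2_def by (simp add: real_sqrt_mult)
  qed
  have key3: "c1*(s2*(a+s2)) < c2*(s1*(a+s1))"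
  proof -
    have "c1*(s2*(a+s2)) = a*(s2*c1) + P2*c1" using s2 by (simp add: algebra_simps power2_eq_square)
    also have "\<dots> < a*(s1*c2) + P1*c2" using key1 key2 a by (intro add_strict_mono) auto
    also have "\<dots> = c2*(s1*(a+s1))" using s1 by (simp add: algebra_simps power2_eq_square)
    finally show ?thesis .
  qed
  have T1: "a*c1/(s1*(a+s1)) < a*c2/(s2*(a+s2))"
  proof -
    have d1: "0 < s1*(a+s1)" "0 < s2*(a+s2)" using s1 s2 a by auto
    have "c1/(s1*(a+s1)) < c2/(s2*(a+s2))"
      using key3 d1 by (simp add: divide_simps mult.commute mult.left_commute)
    then have "a*(c1/(s1*(a+s1))) < a*(c2/(s2*(a+s2)))" using a by (intro mult_strict_left_mono) auto
    then show ?thesis by (simp only: times_divide_eq_right)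
  qed
  have "FF a c2 y = (1-c2^2)*y*Q2/(4*a^2) - a*c2/(s2*(a+s2))"
    using FF_split[OF a c2' y] by (simp add: Q2_def s2_def P2_def)
  also have "\<dots> < (1-c1^2)*y*Q1/(4*a^2) - a*c1/(s1*(a+s1))" using T1 T2 by linarith
  also have "\<dots> = FF a c1 y"
    using FF_split[OF a c1' y] by (simp add: Q1_def s1_def P1_def)
  finally show ?thesis .
qed




lemma pi_not_le0 [simp]: "\<not> pi \<le> (0::real)" using pi_gt_zero by linarith

lemma cos_sq_bounds: "0 \<le> (cos t)^2" "(cos t)^2 \<le> (1::real)"
  by (auto simp: abs_square_le_1)

lemma sqrtPP_ge1:
  assumes "2 \<le> a" "0 \<le> c" "c \<le> 1" "0 \<le> y" "y \<le> 1"
  shows "1 \<le> sqrt (PP a c y)"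
  using sqrtPP_bounds(1)[OF assms] assms(1) by linarith

lemma sqrtPP_cos_ne:
  assumes "2 \<le> a" "0 \<le> c" "c \<le> 1"
  shows "sqrt (PP a c ((cos t)^2)) \<noteq> 0" "a + sqrt (PP a c ((cos t)^2)) \<noteq> 0"
proof -
  have "1 \<le> sqrt (PP a c ((cos t)^2))"
    by (rule sqrtPP_ge1) (use assms cos_sq_bounds(1)[of t] cos_sq_bounds(2)[of t] in auto)
  then show "sqrt (PP a c ((cos t)^2)) \<noteq> 0" "a + sqrt (PP a c ((cos t)^2)) \<noteq> 0"
    using assms(1) by linarith+
qed

lemma JJ_strict_mono:
  assumes a: "2 \<le> a" and c: "0 < c1" "c1 < c2" "c2 \<le> 1"
  shows "JJ a c2 < JJ a c1"
  unfolding JJ_def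
proof (rule integral_less_real)
  show "continuous_on {0..pi} (\<lambda>t. FF a c2 ((cos t)\<^sup>2))" by (rule cont_FF_cos) (use a c in auto)
  show "continuous_on {0..pi} (\<lambda>t. FF a c1 ((cos t)\<^sup>2))" by (rule cont_FF_cos) (use a c in auto)
  show "{0<..<pi} \<noteq> {}"
  proof -
    have "pi/2 \<in> {0<..<pi}" using pi_gt_zero by simp
    then show ?thesis by blast
  qed
  fix t show "FF a c2 ((cos t)\<^sup>2) < FF a c1 ((cos t)\<^sup>2)"
    by (rule FF_strict_mono) (use a c cos_sq_bounds in auto)
qed

lemma JJ_half_neg:
  assumes a: "2 \<le> a"
  shows "JJ a (1/2) < 0"
proof -
  have "FF a (1/2) y < 0" if y: "0 \<le> y" "y \<le> 1" for y
  proof -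
    define s where "s = sqrt (PP a (1/2) y)"
    have s: "1 \<le> s" "s \<le> a + 1" using sqrtPP_ge1[OF a _ _ y] sqrtPP_bounds(2)[OF a _ _ y] unfolding s_def by auto
    have "(3/4)*y*(2*a+s) \<le> (3/4)*1*(3*a+1)"
      using y s a by (intro mult_mono) auto
    also have "\<dots> < 2*a^3"
    proof -
      have "4 \<le> a^2" using a power_mono[of 2 a 2] by auto
      then have "2*a*4 \<le> 2*a*a^2" using a by (intro mult_left_mono) auto
      then have "8*a \<le> 2*a*a^2" by simp
      moreover have "2*a^3 = 2*a*a^2" by (simp add: power3_eq_cube power2_eq_square)
      ultimately have h: "8*a \<le> 2*a^3" by linarith
      with a show ?thesis by (simp add: field_simps)
    qed
    finally have "(1-(1/2)^2)*y*(2*a+s)/(4*a^2) < a*(1/2)"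
      using a by (simp add: divide_simps power3_eq_cube power2_eq_square) 
    then have "(1-(1/2)^2)*y*(2*a+s)/(4*a^2) - a*(1/2) < 0" by simp
    moreover have "0 < s*(a+s)" using s a by auto
    ultimately show ?thesis unfolding FF_def s_def[symmetric] by (simp add: divide_neg_pos)
  qed
  then have "integral {0..pi} (\<lambda>t. FF a (1/2) ((cos t)^2)) < integral {0..pi} (\<lambda>t. 0)"
    by (intro integral_less_real cont_FF_cos continuous_intros)
       (use a cos_sq_bounds pi_gt_zero in \<open>auto intro!: exI[of _ "pi/2"]\<close>)
  then show ?thesis by (simp add: JJ_def)
qed

lemma JJ_zero_pos:
  assumes a: "2 \<le> a"
  shows "0 < JJ a 0"
proof -
  define f where "f t = FF a 0 ((cos t)^2)" for t
  have nn: "0 \<le> FF a 0 y" if y: "0 \<le> y" "y \<le> 1" for y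
  proof -
    define s where "s = sqrt (PP a 0 y)"
    have s: "1 \<le> s" using sqrtPP_ge1[OF a _ _ y] unfolding s_def by auto
    have "FF a 0 y = y*(2*a+s)/(4*a^2)/(s*(a+s))" unfolding FF_def s_def by simp
    then show ?thesis using s a y by simp
  qed
  have f1: "f 0 > 0"
  proof -
    define s where "s = sqrt (PP a 0 1)"
    have s: "1 \<le> s" using sqrtPP_ge1[OF a, of 0 1] unfolding s_def by auto
    have "FF a 0 1 = (2*a+s)/(4*a^2)/(s*(a+s))" unfolding FF_def s_def by simp
    then show ?thesis using s a unfolding f_def by simp
  qed
  have cf: "continuous_on {0..pi} f" unfolding f_def by (rule cont_FF_cos) (use a in auto)
  have nnf: "0 \<le> f t" for t unfolding f_def by (rule nn) (use cos_sq_bounds in auto)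
  have "0 \<le> JJ a 0" unfolding JJ_def f_def[symmetric] by (rule integral_nonneg) (use cf nnf integrable_continuous_real in auto)
  moreover have "JJ a 0 \<noteq> 0"
  proof
    assume "JJ a 0 = 0"
    then have "(f has_integral 0) (cbox 0 pi)"
      using integrable_continuous_real[OF cf] unfolding JJ_def f_def[symmetric]
      by (metis cbox_interval has_integral_integrable_integral)
    then have "f 0 = 0"
      by (intro has_integral_0_cbox_imp_0[of 0 pi f])
         (use cf nnf pi_gt_zero in \<open>auto simp: cbox_interval box_real\<close>)
    with f1 show False by simp
  qed
  ultimately show ?thesis by linarith
qed

lemma JJ_cont:
  assumes a: "2 \<le> a"
  shows "continuous_on {0..1} (JJ a)"
proof -
  have c2: "continuous_on ({0..1} \<times> UNIV) (\<lambda>p. FF a (fst p) ((cos (snd p))^2))"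
  proof -
    have b: "1 \<le> sqrt (PP a (fst p) ((cos (snd p))^2))" if "p \<in> {0..1} \<times> UNIV" for p
      using sqrtPP_ge1[OF a, of "fst p" "(cos (snd p))^2"] that cos_sq_bounds by auto
    have cP: "continuous_on ({0..1} \<times> UNIV) (\<lambda>p. PP a (fst p) ((cos (snd p))^2))"
      unfolding PP_def using a by (intro continuous_intros) auto
    show ?thesis unfolding FF_def
      apply (intro continuous_intros cP)
      using sqrtPP_cos_ne[OF a] a by auto
  qed
  have "continuous_on ({0..1} \<times> cbox 0 pi) (\<lambda>(x, t). FF a x ((cos t)^2))"
    using continuous_on_subset[OF c2, of "{0..1} \<times> cbox 0 pi"] by (auto simp: split_beta)
  from integral_continuous_on_param[OF this]
  show ?thesis unfolding JJ_def by (simp add: cbox_interval)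
qed

lemma theta_tilde_props:
  assumes a: "2 \<le> a"
  shows "0 < theta_tilde a" "theta_tilde a < pi/4" "0 < cos (2*theta_tilde a)"
        "cos (2*theta_tilde a) < 1/2" "JJ a (cos (2*theta_tilde a)) = 0"
proof -
  obtain c where c: "0 \<le> c" "c \<le> 1/2" "JJ a c = 0"
    using IVT2'[of "JJ a" "1/2" 0 0] JJ_half_neg[OF a] JJ_zero_pos[OF a]
          continuous_on_subset[OF JJ_cont[OF a], of "{0..1/2}"] by force
  have c0: "c \<noteq> 0" using c JJ_zero_pos[OF a] by auto
  have c1: "c \<noteq> 1/2"
  proof
    assume "c = 1/2" then have "JJ a c = JJ a (1/2)" by (simp only:)
    then show False using c(3) JJ_half_neg[OF a] by linarith
  qed
  define th where "th = arccos c / 2"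
  have cth: "cos (2*th) = c" using c by (simp add: th_def cos_arccos)
  have "arccos c < arccos 0" using c c0 by (intro arccos_less_arccos) auto
  then have th1: "th < pi/4" by (simp add: th_def)
  have "arccos 1 < arccos c" using c by (intro arccos_less_arccos) auto
  then have th0: "0 < th" by (simp add: th_def)
  have tp: "theta_plus a = pi/2" using a by (simp add: theta_plus_def)
  have uniq: "\<theta> = th" if h: "0 < \<theta>" "\<theta> < theta_plus a" "\<theta> < pi/4" "Lint a \<theta> = 0" for \<theta>
  proof -
    have cpos: "0 < cos (2*\<theta>)" using h by (intro cos_gt_zero) auto
    have cle: "cos (2*\<theta>) < 1"
    proof -
      have "cos (2*\<theta>) < cos 0" using h by (intro cos_monotone_0_pi) auto
      then show ?thesis by simp
    qed
    have J: "JJ a (cos (2*\<theta>)) = 0" using Lint_eq[OF a, of \<theta>] h cpos by simp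
    have "cos (2*\<theta>) = c"
    proof (rule ccontr)
      assume ne: "cos (2*\<theta>) \<noteq> c"
      show False
      proof (cases "cos (2*\<theta>) < c")
        case True
        then have "JJ a c < JJ a (cos (2*\<theta>))" using c cpos by (intro JJ_strict_mono[OF a]) auto
        then show False using J c by simp
      next
        case False
        then have "c < cos (2*\<theta>)" using ne by simp
        then have "JJ a (cos (2*\<theta>)) < JJ a c" using c c0 cle by (intro JJ_strict_mono[OF a]) auto
        then show False using J c by simp
      qed
    qed
    then have "arccos (cos (2*\<theta>)) = arccos c" by simp
    moreover have "arccos (cos (2*\<theta>)) = 2*\<theta>" using h by (intro arccos_cos) auto
    ultimately show ?thesis by (simp add: th_def)
  qed
  have Lth: "Lint a th = 0" using Lint_eq[OF a, of th] cth c by simp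
  have "theta_tilde a = th"
    unfolding theta_tilde_def
  proof (rule the_equality)
    show "0 < th \<and> th < theta_plus a \<and> th < pi / 4 \<and> Lint a th = 0"
      using th0 th1 Lth tp by auto
  qed (use uniq in blast)
  then show "0 < theta_tilde a" "theta_tilde a < pi/4" "0 < cos (2*theta_tilde a)"
        "cos (2*theta_tilde a) < 1/2" "JJ a (cos (2*theta_tilde a)) = 0"
    using th0 th1 cth c c0 c1 by auto
qed




lemma deriv_nonzero_inj:
  fixes f f' :: "real \<Rightarrow> real"
  assumes d: "\<And>u. (f has_real_derivative f' u) (at u)" and nz: "\<And>u. f' u \<noteq> 0"
  shows "inj f"
proof (rule injI)
  fix x y assume e: "f x = f y"
  show "x = y"
  proof (rule ccontr)
    assume "x \<noteq> y"
    then consider "x < y" | "y < x" by linarith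
    then show False
    proof cases
      case 1
      from MVT2[OF 1, of f f'] d obtain z where "f y - f x = (y - x) * f' z" by blast
      with e 1 nz[of z] show False by simp
    next
      case 2
      from MVT2[OF 2, of f f'] d obtain z where "f x - f y = (x - y) * f' z" by blast
      with e 2 nz[of z] show False by simp
    qed
  qed
qed

lemma deriv_sign_const:
  fixes f f' :: "real \<Rightarrow> real"
  assumes d: "\<And>u. (f has_real_derivative f' u) (at u)" and nz: "\<And>u. f' u \<noteq> 0"
    and f0: "f' 0 < 0"
  shows "f' u < 0"
proof (rule ccontr)
  assume "\<not> f' u < 0"
  then have pos: "0 < f' u" using nz[of u] by linarith
  have inj: "inj f" by (rule deriv_nonzero_inj[OF d nz])
  have cont: "continuous_on S f" for S
    using d by (intro continuous_at_imp_continuous_on) (auto intro: DERIV_isCont)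
  have three: "(f p < f x \<and> f x < f q) \<or> (f q < f x \<and> f x < f p)" if "p < x" "x < q" for p x q
    by (rule continuous_inj_imp_mono[OF that cont]) (use inj in \<open>auto simp: inj_on_def inj_def\<close>)
  have "u \<noteq> 0" using pos f0 by auto
  then consider "0 < u" | "u < 0" by linarith
  then show False
  proof cases
    case 1
    obtain d1 where d1: "d1 > 0" "\<And>h. h > 0 \<Longrightarrow> h < d1 \<Longrightarrow> f (0 + h) < f 0"
      using DERIV_neg_dec_right[OF d f0] by blast
    obtain d2 where d2: "d2 > 0" "\<And>h. h > 0 \<Longrightarrow> h < d2 \<Longrightarrow> f (u - h) < f u"
      using DERIV_pos_inc_left[OF d pos] by blast
    define h1 where "h1 = min (d1/2) (u/3)"
    define h2 where "h2 = min (d2/2) (u/3)"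
    have h: "0 < h1" "h1 < d1" "0 < h2" "h2 < d2" "h1 < u - h2" "u - h2 < u"
      using 1 d1 d2 by (auto simp: h1_def h2_def)
    have A: "f h1 < f 0" using d1(2)[of h1] h by simp
    have B: "f (u - h2) < f u" using d2(2)[of h2] h by simp
    have "f u < f h1" using three[of 0 h1 u] A h by auto
    moreover have "(f h1 < f (u-h2) \<and> f (u-h2) < f u) \<or> (f u < f (u-h2) \<and> f (u-h2) < f h1)"
      using three[of h1 "u-h2" u] h by auto
    ultimately show False using B by auto
  next
    case 2
    obtain d1 where d1: "d1 > 0" "\<And>h. h > 0 \<Longrightarrow> h < d1 \<Longrightarrow> f 0 < f (0 - h)"
      using DERIV_neg_dec_left[OF d f0] by blast
    obtain d2 where d2: "d2 > 0" "\<And>h. h > 0 \<Longrightarrow> h < d2 \<Longrightarrow> f u < f (u + h)"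
      using DERIV_pos_inc_right[OF d pos] by blast
    define h1 where "h1 = min (d1/2) (-u/3)"
    define h2 where "h2 = min (d2/2) (-u/3)"
    have h: "0 < h1" "h1 < d1" "0 < h2" "h2 < d2" "u + h2 < -h1" "u < u + h2" "-h1 < 0"
      using 2 d1 d2 by (auto simp: h1_def h2_def)
    have A: "f 0 < f (-h1)" using d1(2)[of h1] h by simp
    have B: "f u < f (u + h2)" using d2(2)[of h2] h by simp
    have "f (-h1) < f u" using three[of u "-h1" 0] A h by auto
    moreover have "(f u < f (u+h2) \<and> f (u+h2) < f (-h1)) \<or> (f (-h1) < f (u+h2) \<and> f (u+h2) < f u)"
      using three[of u "u+h2" "-h1"] h by auto
    ultimately show False using B by auto
  qed
qed




lemma ode_solution:
  fixes S :: "real \<Rightarrow> real"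
  assumes cont: "continuous_on UNIV S" and lo: "\<And>t. m \<le> S t" and m: "0 < m"
    and hi: "\<And>t. S t \<le> M"
  obtains \<phi> where "\<phi> 0 = 0" "\<And>u. (\<phi> has_real_derivative - S (\<phi> u)) (at u)"
    "\<And>f f'. f 0 = 0 \<Longrightarrow> f' 0 \<le> 0 \<Longrightarrow> (\<And>u. (f has_real_derivative f' u) (at u)) \<Longrightarrow>
            (\<And>u. (f' u)^2 = (S (f u))^2) \<Longrightarrow> f = \<phi>"
proof -
  have Spos: "0 < S t" for t using lo[of t] m by linarith
  have M: "0 < M" using Spos[of 0] hi[of 0] by linarith
  have ci: "continuous_on UNIV (\<lambda>t. 1 / S t)"
    using cont Spos by (intro continuous_intros) (auto simp: less_imp_neq[symmetric])
  obtain U where U0: "U 0 = 0" and dU: "\<And>x. (U has_real_derivative 1 / S x) (at x)"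
    using antideriv_exists[OF ci] by blast
  have incr: "(y - x)/M \<le> U y - U x" if xy: "x < y" for x y
  proof -
    obtain z where "U y - U x = (y - x) * (1 / S z)" using MVT2[OF xy, of U "\<lambda>x. 1 / S x"] dU by blast
    moreover have "1/M \<le> 1 / S z" using hi[of z] Spos[of z] by (simp add: frac_le)
    ultimately show ?thesis using xy by (simp add: mult_left_mono divide_inverse)
  qed
  have incr': "(y - x)/M \<le> U y - U x" if "x \<le> y" for x y
    using incr[of x y] that by (cases "x = y") auto
  have injU: "inj U"
  proof (rule injI)
    fix x y assume "U x = U y"
    then show "x = y" using incr[of x y] incr[of y x] M
      by (cases x y rule: linorder_cases) (auto simp: divide_le_0_iff)
  qed
  have contU: "continuous_on S' U" for S'
    using dU by (intro continuous_at_imp_continuous_on) (auto intro: DERIV_isCont)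
  have surjU: "surj U"
  proof -
    have "\<exists>t. U t = w" for w
    proof (cases "0 \<le> w")
      case True
      have "w \<le> U (M*w)" using incr'[of 0 "M*w"] True M U0 by simp
      then show ?thesis using IVT'[of U 0 w "M*w"] U0 True M contU by auto
    next
      case False
      have "U (M*w) \<le> w" using incr'[of "M*w" 0] False M U0 by (simp add: mult_le_0_iff)
      then show ?thesis using IVT'[of U "M*w" w 0] U0 False M contU by (auto simp: mult_le_0_iff)
    qed
    then show ?thesis by (metis surjI)
  qed
  define V where "V = inv U"
  have UV: "U (V w) = w" for w unfolding V_def by (rule surj_f_inv_f[OF surjU])
  have VU: "V (U t) = t" for t unfolding V_def by (rule inv_f_f[OF injU])
  have contV: "isCont V x" for x
  proof -
    have "isCont V (U (V x))"
      by (rule isCont_inverse_function[where d=1]) (auto simp: VU intro: DERIV_isCont[OF dU])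
    then show ?thesis by (simp add: UV)
  qed
  have dV: "(V has_real_derivative S (V x)) (at x)" for x
  proof -
    have "(V has_real_derivative inverse (1 / S (V x))) (at x)"
      by (rule DERIV_inverse_function[where a="x-1" and b="x+1" and f=U])
         (use dU Spos[of "V x"] UV contV in auto)
    then show ?thesis by simp
  qed
  define \<phi> where "\<phi> u = V (- u)" for u
  have phi0: "\<phi> 0 = 0" unfolding \<phi>_def using VU[of 0] U0 by simp
  have dphi: "(\<phi> has_real_derivative - S (\<phi> u)) (at u)" for u
  proof -
    have "((\<lambda>u. V (- u)) has_real_derivative S (V (- u)) * (- 1)) (at u)"
      by (rule DERIV_chain2[OF dV]) (auto intro!: derivative_eq_intros)
    then show ?thesis unfolding \<phi>_def by simp
  qed
  have Uphi: "U (\<phi> u) = - u" for u unfolding \<phi>_def by (simp add: UV)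
  have uniq: "f = \<phi>" if f0: "f 0 = 0" and f'0: "f' 0 \<le> 0" and df: "\<And>u. (f has_real_derivative f' u) (at u)"
     and sq: "\<And>u. (f' u)^2 = (S (f u))^2" for f f'
  proof -
    have nz: "f' u \<noteq> 0" for u using sq[of u] Spos[of "f u"] by auto
    have neg: "f' u < 0" for u
      by (rule deriv_sign_const[OF df nz]) (use f'0 nz[of 0] in linarith)
    have eq: "f' u = - S (f u)" for u
    proof -
      have "\<bar>f' u\<bar> = \<bar>S (f u)\<bar>" using sq[of u] by (metis power2_eq_iff abs_minus_cancel abs_of_nonneg abs_of_nonpos le_cases)
      then show ?thesis using neg[of u] Spos[of "f u"] by auto
    qed
    have dH: "((\<lambda>u. U (f u) + u) has_real_derivative 0) (at u)" for u
    proof -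
      have "((\<lambda>u. U (f u) + u) has_real_derivative (1 / S (f u)) * f' u + 1) (at u)"
      proof -
        have "((\<lambda>u. U (f u)) has_real_derivative (1 / S (f u)) * f' u) (at u)"
          by (rule DERIV_chain2[OF dU df])
        then show ?thesis by (intro derivative_eq_intros) auto
      qed
      moreover have "(1 / S (f u)) * f' u + 1 = 0" using eq[of u] Spos[of "f u"] by simp
      ultimately show ?thesis by simp
    qed
    have "U (f u) + u = U (f 0) + 0" for u by (rule deriv_zero_const[OF dH])
    then have "U (f u) = U (\<phi> u)" for u using f0 U0 Uphi by (metis add.commute add_0 add_left_cancel diff_0 diff_add_cancel)
    then show ?thesis using injU by (auto simp: fun_eq_iff inj_def)
  qed
  show ?thesis by (rule that[OF phi0 dphi uniq])
qed




lemma Pp_eq: "Pp a \<theta> x = PP a (cos (2*\<theta>)) (x^2)"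
proof -
  have C2: "(Cc a \<theta>)^2 = (1 - (cos (2*\<theta>))^2)/(4*a^2)"
    by (simp add: Cc_def power_divide sin_squared_eq power_mult_distrib)
  show ?thesis unfolding Pp_def PP_def C2 by (simp add: power2_eq_square power4_eq_xxxx)
qed

definition cT :: "real \<Rightarrow> real" where "cT a = cos (2*theta_tilde a)"
definition SS :: "real \<Rightarrow> real \<Rightarrow> real" where "SS a t = sqrt (PP a (cT a) ((cos t)^2))"
definition rr :: "real \<Rightarrow> real \<Rightarrow> real" where "rr a t = FF a (cT a) ((cos t)^2) / Ct a"

context fixes a :: real assumes a: "2 \<le> a"
begin

lemma cT_bounds: "0 < cT a" "cT a < 1/2" "0 \<le> cT a" "cT a \<le> 1"
  using theta_tilde_props[OF a] by (auto simp: cT_def)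

lemma Ct_props: "0 < Ct a" "Ct a \<le> 1/(2*a)" "1/(4*a) \<le> Ct a" "(Ct a)^2 = (1 - (cT a)^2)/(4*a^2)"
proof -
  define th where "th = theta_tilde a"
  have th: "0 < th" "th < pi/4" using theta_tilde_props[OF a] by (auto simp: th_def)
  have sp: "0 < sin (2*th)" using th by (intro sin_gt_zero) auto
  have s2: "(sin (2*th))^2 = 1 - (cT a)^2" by (simp add: cT_def th_def sin_squared_eq)
  have "(1/2)^2 \<le> (sin (2*th))^2" using s2 cT_bounds
  proof -
    have "(cT a)^2 \<le> (1/2)^2" using cT_bounds by (intro power_mono) auto
    then show ?thesis using s2 by (simp add: power2_eq_square)
  qed
  then have sh: "1/2 \<le> sin (2*th)" using sp by (simp add: power_mono_iff abs_le_square_iff)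
  have s1: "sin (2*th) \<le> 1" by simp
  show "0 < Ct a" using sp a by (simp add: Ct_def Cc_def th_def)
  show "Ct a \<le> 1/(2*a)" using s1 a by (simp add: Ct_def Cc_def th_def[symmetric] divide_right_mono)
  show "1/(4*a) \<le> Ct a" using sh a by (simp add: Ct_def Cc_def th_def[symmetric] field_simps)
  show "(Ct a)^2 = (1 - (cT a)^2)/(4*a^2)"
    by (simp add: Ct_def Cc_def th_def[symmetric] power_divide s2 power_mult_distrib)
qed

lemma SS_bounds: "1 \<le> SS a t" "a - 1 \<le> SS a t" "SS a t \<le> a + 1" "0 < SS a t"
proof -
  show "a - 1 \<le> SS a t" unfolding SS_def by (rule sqrtPP_bounds(1)[OF a]) (use cT_bounds cos_sq_bounds in auto)
  show "SS a t \<le> a + 1" unfolding SS_def by (rule sqrtPP_bounds(2)[OF a]) (use cT_bounds cos_sq_bounds in auto)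
  show "1 \<le> SS a t" unfolding SS_def by (rule sqrtPP_ge1[OF a]) (use cT_bounds cos_sq_bounds in auto)
  then show "0 < SS a t" by linarith
qed

lemma SS_cont: "continuous_on UNIV (SS a)"
  unfolding SS_def PP_def using a by (intro continuous_intros) auto

lemma SS_sq: "(SS a t)^2 = Pp a (theta_tilde a) (cos t)"
proof -
  have "0 < PP a (cT a) ((cos t)^2)" by (rule sqrtPP_bounds(3)[OF a]) (use cT_bounds cos_sq_bounds in auto)
  then show ?thesis unfolding SS_def Pp_eq cT_def by simp
qed

lemma phi_props: "phi a 0 = 0" "\<And>u. (phi a has_real_derivative - SS a (phi a u)) (at u)"
  "\<And>u. dphi a u = - SS a (phi a u)"
proof -
  obtain \<phi> where p0: "\<phi> 0 = 0" and dp: "\<And>u. (\<phi> has_real_derivative - SS a (\<phi> u)) (at u)"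
    and un: "\<And>f f'. f 0 = 0 \<Longrightarrow> f' 0 \<le> 0 \<Longrightarrow> (\<And>u. (f has_real_derivative f' u) (at u)) \<Longrightarrow>
            (\<And>u. (f' u)^2 = (SS a (f u))^2) \<Longrightarrow> f = \<phi>"
    using ode_solution[OF SS_cont, of 1 "a+1", OF SS_bounds(1) zero_less_one SS_bounds(3)] by blast
  have "phi a = \<phi>"
    unfolding phi_def
  proof (rule the_equality)
    show "\<exists>f'. \<phi> 0 = 0 \<and> f' 0 \<le> 0 \<and> (\<forall>u. (\<phi> has_real_derivative f' u) (at u)) \<and>
       (\<forall>u. (f' u)\<^sup>2 = Pp a (theta_tilde a) (cos (\<phi> u)))"
      using p0 dp SS_bounds(4)[of "\<phi> 0"]
      by (intro exI[of _ "\<lambda>u. - SS a (\<phi> u)"]) (auto simp: SS_sq)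
    fix f assume "\<exists>f'. f 0 = 0 \<and> f' 0 \<le> 0 \<and> (\<forall>u. (f has_real_derivative f' u) (at u)) \<and>
       (\<forall>u. (f' u)\<^sup>2 = Pp a (theta_tilde a) (cos (f u)))"
    then obtain f' where "f 0 = 0" "f' 0 \<le> 0" "\<And>u. (f has_real_derivative f' u) (at u)"
       "\<And>u. (f' u)\<^sup>2 = Pp a (theta_tilde a) (cos (f u))" by blast
    then show "f = \<phi>" by (intro un[of f f']) (auto simp: SS_sq)
  qed
  then show "phi a 0 = 0" "\<And>u. (phi a has_real_derivative - SS a (phi a u)) (at u)" using p0 dp by auto
  then show "\<And>u. dphi a u = - SS a (phi a u)" unfolding dphi_def by (auto intro: DERIV_imp_deriv)
qed

lemma phi_cont: "continuous_on UNIV (phi a)"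
  using phi_props(2) by (intro continuous_at_imp_continuous_on) (auto intro: DERIV_isCont)

end



lemma alg_r:
  fixes a S C y c :: real
  assumes "0 < a" "0 < S" "0 < C"
  shows "((4*a^2*C^2)*y*(2*a+S)/(4*a^2) - a*c)/(S*(a+S))/C = (a*((C^2*y - c)/(a+S))/C + C*y)/S"
proof -
  have g: "((4*a^2*C^2)*y*(a+T)/(4*a^2) - a*c)/(S*T)/C = (a*((C^2*y - c)/T)/C + C*y)/S"
    if "T \<noteq> 0" for T
    using that assms by (simp add: field_simps power2_eq_square)
  have "2*a + S = a + (a+S)" by simp
  then show ?thesis using g[of "a+S"] assms by simp
qed

definition Ah :: "real \<Rightarrow> real \<Rightarrow> real" where "Ah a u = a * G a u / Ct a + beta a u"

context fixes a :: real assumes a: "2 \<le> a"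
begin

lemma dG_eq: "dG a u = ((Ct a)^2 * (cos (phi a u))^2 - cT a) / (a + SS a (phi a u))"
  unfolding dG_def phi_props(3)[OF a] cT_def by simp

lemma SSphi_cont: "continuous_on UNIV (\<lambda>u. SS a (phi a u))"
  by (rule continuous_on_compose2[OF SS_cont[OF a] phi_cont[OF a]]) auto

lemma beta_props: "beta a 0 = 0" "\<And>u. (beta a has_real_derivative Ct a * (cos (phi a u))^2) (at u)"
proof -
  have c: "continuous_on UNIV (\<lambda>u. Ct a * (cos (phi a u))^2)"
    by (intro continuous_intros phi_cont[OF a])
  show "beta a 0 = 0" "\<And>u. (beta a has_real_derivative Ct a * (cos (phi a u))^2) (at u)"
    unfolding beta_def using prim_props[OF c] by auto
qed

lemma G_props: "G a 0 = 0" "\<And>u. (G a has_real_derivative dG a u) (at u)"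
proof -
  have nz: "a + SS a (phi a u) \<noteq> 0" for u using SS_bounds(4)[OF a, of "phi a u"] a by linarith
  have "continuous_on UNIV (\<lambda>u. ((Ct a)^2 * (cos (phi a u))^2 - cT a) / (a + SS a (phi a u)))"
    by (intro continuous_intros phi_cont[OF a] SSphi_cont) (use nz in auto)
  then have c: "continuous_on UNIV (dG a)" by (simp add: dG_eq[abs_def])
  show "G a 0 = 0" "\<And>u. (G a has_real_derivative dG a u) (at u)"
    unfolding G_def using prim_props[OF c] by auto
qed

lemma rr_cont: "continuous_on UNIV (rr a)"
  unfolding rr_def by (intro continuous_intros cont_FF_cos[OF a]) (use cT_bounds[OF a] Ct_props[OF a] in auto)

lemma rr_alt: "rr a t = (a*(((Ct a)^2*(cos t)^2 - cT a)/(a + SS a t))/Ct a + Ct a*(cos t)^2)/SS a t"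
proof -
  have e: "1 - (cT a)^2 = 4*a^2*(Ct a)^2" using Ct_props(4)[OF a] a by (simp add: field_simps)
  show ?thesis unfolding rr_def FF_def SS_def[symmetric] e
    by (rule alg_r) (use a Ct_props(1)[OF a] SS_bounds(4)[OF a] in \<open>auto simp: SS_def\<close>)
qed

lemma rr_periodic: "rr a (t + pi) = rr a t"
  unfolding rr_def by simp

lemma Ah_eq: "Ah a u = - prim (rr a) (phi a u)"
proof -
  have pr: "prim (rr a) 0 = 0" "\<And>u. (prim (rr a) has_real_derivative rr a u) (at u)"
    using prim_props[OF rr_cont] by auto
  have d: "((\<lambda>u. Ah a u + prim (rr a) (phi a u)) has_real_derivative 0) (at u)" for u
  proof -
    have d1: "((\<lambda>u. prim (rr a) (phi a u)) has_real_derivative rr a (phi a u) * (- SS a (phi a u))) (at u)"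
      by (rule DERIV_chain2[OF pr(2) phi_props(2)[OF a]])
    have dA: "((\<lambda>u. (a / Ct a) * G a u + beta a u) has_real_derivative (a / Ct a) * dG a u + Ct a * (cos (phi a u))^2) (at u)"
      by (rule DERIV_add[OF DERIV_cmult[OF G_props(2)] beta_props(2)])
    have AhE: "Ah a = (\<lambda>u. (a / Ct a) * G a u + beta a u)" by (auto simp: Ah_def fun_eq_iff)
    have "((\<lambda>u. Ah a u + prim (rr a) (phi a u)) has_real_derivative
        a * dG a u / Ct a + Ct a * (cos (phi a u))^2 + rr a (phi a u) * (- SS a (phi a u))) (at u)"
      using DERIV_add[OF dA d1] unfolding AhE by simp
    moreover have "a * dG a u / Ct a + Ct a * (cos (phi a u))^2 + rr a (phi a u) * (- SS a (phi a u)) = 0"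
      unfolding rr_alt dG_eq using SS_bounds(4)[OF a, of "phi a u"] by (simp add: field_simps)
    ultimately show ?thesis by simp
  qed
  have "Ah a u + prim (rr a) (phi a u) = Ah a 0 + prim (rr a) (phi a 0)" by (rule deriv_zero_const[OF d])
  also have "\<dots> = 0" by (simp add: Ah_def G_props(1) beta_props(1) phi_props(1)[OF a] pr(1))
  finally show ?thesis by simp
qed

end



lemma FF_abs_bound:
  assumes a: "2 \<le> a" and c: "0 \<le> c" "c \<le> 1" and y: "0 \<le> y" "y \<le> 1"
  shows "\<bar>FF a c y\<bar> \<le> 2 / a"
proof -
  define s where "s = sqrt (PP a c y)"
  have s: "a - 1 \<le> s" "s \<le> a + 1" using sqrtPP_bounds(1,2)[OF a c y] by (auto simp: s_def)
  define T where "T = (1-c^2)*y*(2*a+s)/(4*a^2)"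
  have T0: "0 \<le> T" unfolding T_def using c y s a by (intro divide_nonneg_pos mult_nonneg_nonneg) (auto simp: power_le_one)
  have T1: "T \<le> a"
  proof -
    have "(1-c^2)*y*(2*a+s) \<le> 1*1*(3*a+1)"
      using c y s a by (intro mult_mono) (auto simp: power_le_one)
    also have "\<dots> \<le> 4*a^2 * a"
    proof -
      have "4 \<le> a^2" using a power_mono[of 2 a 2] by auto
      then have "4*a \<le> a^2*a" using a by (intro mult_right_mono) auto
      moreover have "4*a^2*a = 4*(a^2*a)" by simp
      moreover have "1*1*(3*a+1) = 3*a + 1" by simp
      ultimately show ?thesis using a by linarith
    qed
    finally have X: "(1-c^2)*y*(2*a+s) \<le> a * (4*a^2)" by (simp add: ac_simps)
    have p: "0 < 4*a^2" using a by simp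
    show ?thesis unfolding T_def pos_divide_le_eq[OF p] using X .
  qed
  have ac: "0 \<le> a*c" "a*c \<le> a" using a c by (auto simp: mult_le_cancel_left1)
  have N: "\<bar>T - a*c\<bar> \<le> a" using T0 T1 ac by linarith
  have D: "a^2/2 \<le> s*(a+s)"
  proof -
    have "a/2 \<le> s" "a \<le> a + s" using s a by auto
    then have "(a/2)*a \<le> s*(a+s)" using a by (intro mult_mono) auto
    then show ?thesis by (simp add: power2_eq_square)
  qed
  have Dp: "0 < a^2/2" using a by simp
  have "\<bar>FF a c y\<bar> = \<bar>T - a*c\<bar> / (s*(a+s))"
  proof -
    have "0 < s*(a+s)" using D Dp by linarith
    then show ?thesis unfolding FF_def T_def[symmetric] s_def[symmetric] by (simp add: abs_divide)
  qed
  also have "\<dots> \<le> a / (a^2/2)"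
    using N D Dp by (intro frac_le) auto
  also have "\<dots> = 2 / a" using a by (simp add: power2_eq_square)
  finally show ?thesis .
qed

context fixes a :: real assumes a: "2 \<le> a"
begin

lemma rr_bound: "\<bar>rr a t\<bar> \<le> 8"
proof -
  have F: "\<bar>FF a (cT a) ((cos t)^2)\<bar> \<le> 2/a"
    by (rule FF_abs_bound[OF a]) (use cT_bounds[OF a] cos_sq_bounds in auto)
  have C: "1/(4*a) \<le> Ct a" "0 < Ct a" using Ct_props[OF a] by auto
  have "\<bar>rr a t\<bar> = \<bar>FF a (cT a) ((cos t)^2)\<bar> / Ct a" unfolding rr_def using C by (simp add: abs_divide)
  also have "\<dots> \<le> (2/a) / (1/(4*a))" using F C a by (intro frac_le) auto
  also have "\<dots> = 8" using a by simp
  finally show ?thesis .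
qed

lemma prim_rr_pi: "prim (rr a) pi = 0"
proof -
  have pr: "prim (rr a) 0 = 0" "\<And>u. (prim (rr a) has_real_derivative rr a u) (at u)"
    using prim_props[OF rr_cont[OF a]] by auto
  have vd: "(prim (rr a) has_vector_derivative rr a x) (at x within {0..pi})" for x
    using has_field_derivative_at_within[OF pr(2)[of x], of "{0..pi}"]
    unfolding has_real_derivative_iff_has_vector_derivative .
  have i1: "(rr a has_integral (prim (rr a) pi - prim (rr a) 0)) {0..pi}"
    by (rule fundamental_theorem_of_calculus) (use vd in auto)
  moreover have i2: "(rr a has_integral (JJ a (cT a) / Ct a)) {0..pi}"
  proof -
    have "((\<lambda>t. FF a (cT a) ((cos t)^2)) has_integral JJ a (cT a)) {0..pi}"
      unfolding JJ_def
      by (intro integrable_integral integrable_continuous_real cont_FF_cos[OF a]) (use cT_bounds[OF a] in auto)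
    from has_integral_divide[OF this, of "Ct a"] show ?thesis by (simp add: rr_def[abs_def])
  qed
  moreover have "JJ a (cT a) = 0" using theta_tilde_props(5)[OF a] by (simp add: cT_def)
  ultimately have "prim (rr a) pi - prim (rr a) 0 = JJ a (cT a) / Ct a" using has_integral_unique[OF i1 i2] by simp
  then show ?thesis using pr(1) \<open>JJ a (cT a) = 0\<close> by simp
qed

lemma prim_rr_periodic: "prim (rr a) (t + pi) = prim (rr a) t"
proof -
  have pr: "prim (rr a) 0 = 0" "\<And>u. (prim (rr a) has_real_derivative rr a u) (at u)"
    using prim_props[OF rr_cont[OF a]] by auto
  have d: "((\<lambda>t. prim (rr a) (t + pi) - prim (rr a) t) has_real_derivative 0) (at x)" for x
  proof -
    have "((\<lambda>t. prim (rr a) (t + pi)) has_real_derivative rr a (x + pi) * 1) (at x)"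
      by (rule DERIV_chain2[OF pr(2)]) (auto intro!: derivative_eq_intros)
    from DERIV_diff[OF this pr(2)[of x]] show ?thesis by (simp add: rr_periodic[OF a])
  qed
  have "prim (rr a) (t + pi) - prim (rr a) t = prim (rr a) (0 + pi) - prim (rr a) 0"
    by (rule deriv_zero_const[OF d])
  then show ?thesis using pr(1) prim_rr_pi by simp
qed

lemma prim_rr_int: "prim (rr a) (t + real_of_int k * pi) = prim (rr a) t"
proof -
  have n: "prim (rr a) (t + real n * pi) = prim (rr a) t" for n t
  proof (induction n)
    case (Suc n)
    have "prim (rr a) (t + real (Suc n) * pi) = prim (rr a) ((t + real n * pi) + pi)"
      by (simp add: algebra_simps)
    also have "\<dots> = prim (rr a) (t + real n * pi)" by (rule prim_rr_periodic)
    also have "\<dots> = prim (rr a) t" by (rule Suc.IH)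
    finally show ?case .
  qed simp
  show ?thesis
  proof (cases "0 \<le> k")
    case True
    then show ?thesis using n[of t "nat k"] by simp
  next
    case False
    have "prim (rr a) ((t + real_of_int k * pi) + real (nat (-k)) * pi) = prim (rr a) (t + real_of_int k * pi)"
      by (rule n)
    moreover have "(t + real_of_int k * pi) + real (nat (-k)) * pi = t" using False by simp
    ultimately show ?thesis by simp
  qed
qed

lemma prim_rr_bound: "\<bar>prim (rr a) t\<bar> \<le> 8*pi"
proof -
  have pr: "prim (rr a) 0 = 0" "\<And>u. (prim (rr a) has_real_derivative rr a u) (at u)"
    using prim_props[OF rr_cont[OF a]] by auto
  define k where "k = \<lfloor>t/pi\<rfloor>"
  define t0 where "t0 = t - real_of_int k * pi"
  have "real_of_int k \<le> t/pi" "t/pi < real_of_int k + 1" unfolding k_def by linarith+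
  then have t0: "0 \<le> t0" "t0 < pi" unfolding t0_def using pi_gt_zero
    by (auto simp: field_simps)
  have eq: "prim (rr a) t = prim (rr a) t0" using prim_rr_int[of t0 k] by (simp add: t0_def)
  have "\<bar>prim (rr a) t0\<bar> \<le> 8*t0"
  proof (cases "t0 = 0")
    case True then show ?thesis using pr(1) by simp
  next
    case False
    then have "0 < t0" using t0 by simp
    from MVT2[OF this, of "prim (rr a)" "rr a"] pr obtain z where "prim (rr a) t0 - prim (rr a) 0 = (t0 - 0) * rr a z" by blast
    then have "\<bar>prim (rr a) t0\<bar> = t0 * \<bar>rr a z\<bar>" using pr(1) t0 by (simp add: abs_mult)
    also have "\<dots> \<le> t0 * 8" using rr_bound t0 by (intro mult_left_mono) auto
    finally show ?thesis by simp
  qed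
  then show ?thesis using eq t0 by simp
qed

end



lemma abs_prod3:
  fixes x y z X Y Z :: real
  assumes "\<bar>x\<bar> \<le> X" "\<bar>y\<bar> \<le> Y" "\<bar>z\<bar> \<le> Z"
  shows "\<bar>x*y*z\<bar> \<le> X*Y*Z"
proof -
  have "\<bar>x*y*z\<bar> = \<bar>x\<bar>*\<bar>y\<bar>*\<bar>z\<bar>" by (simp add: abs_mult)
  also have "\<dots> \<le> X*Y*Z"
    using assms by (intro mult_mono) (auto intro: order_trans[OF abs_ge_zero])
  finally show ?thesis .
qed

lemma hyp_bounds:
  fixes A B :: real assumes "\<bar>A\<bar> \<le> B"
  shows "\<bar>sinh A\<bar> \<le> exp B" "\<bar>cosh A\<bar> \<le> exp B"
proof -
  have e1: "exp A \<le> exp B" "exp (-A) \<le> exp B" using assms by auto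
  have p: "0 < exp A" "0 < exp (-A)" by auto
  have s: "2 * sinh A = exp A - exp (-A)" by (simp add: sinh_field_def)
  have c: "2 * cosh A = exp A + exp (-A)" by (simp add: cosh_field_def)
  have "\<bar>exp A - exp (-A)\<bar> \<le> 2 * exp B" unfolding abs_le_iff using e1 p by linarith
  then have "\<bar>2 * sinh A\<bar> \<le> 2 * exp B" unfolding s .
  then show "\<bar>sinh A\<bar> \<le> exp B" by (simp add: abs_mult)
  have "\<bar>exp A + exp (-A)\<bar> \<le> 2 * exp B" unfolding abs_le_iff using e1 p by linarith
  then have "\<bar>2 * cosh A\<bar> \<le> 2 * exp B" unfolding c .
  then show "\<bar>cosh A\<bar> \<le> exp B" by (simp add: abs_mult)
qed

lemma generic_bound:
  fixes a C g p A B x1 :: real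
  assumes a: "2 \<le> a" and C: "0 \<le> C" "C \<le> 1/(2*a)" and g: "\<bar>g\<bar> \<le> 1/a" and A: "\<bar>A\<bar> \<le> B"
  shows "\<bar>g/a * cos p * sinh A - C/a * sin p * cosh A\<bar>
       + \<bar>C/a*(g/a - 1)*cos p*cosh A - 1/a*(C^2/a + g)* sin p* sinh A\<bar> \<le> 5*exp B/a^2"
proof -
  define E where "E = exp B"
  have h: "\<bar>sinh A\<bar> \<le> E" "\<bar>cosh A\<bar> \<le> E" using hyp_bounds[OF A] by (auto simp: E_def)
  have cs: "\<bar>cos p\<bar> \<le> 1" "\<bar>sin p\<bar> \<le> 1" by auto
  have a0: "0 < a" using a by simp
  have ga: "\<bar>g/a\<bar> \<le> 1/a^2"
  proof -
    have "\<bar>g\<bar>/a \<le> (1/a)/a" by (rule divide_right_mono[OF g]) (use a0 in simp)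
    then show ?thesis using a0 by (simp add: abs_divide power2_eq_square)
  qed
  have Ca: "\<bar>C/a\<bar> \<le> 1/(2*a^2)"
  proof -
    have "C/a \<le> (1/(2*a))/a" by (rule divide_right_mono[OF C(2)]) (use a0 in simp)
    then show ?thesis using a0 C by (simp add: abs_divide power2_eq_square)
  qed
  have ia: "1/a^2 \<le> 1/4"
  proof -
    have "4 \<le> a^2" using a power_mono[of 2 a 2] by auto
    then show ?thesis by (simp add: divide_simps)
  qed
  have ia0: "0 \<le> 1/a^2" by simp
  have t1: "\<bar>g/a * cos p * sinh A\<bar> \<le> 1/a^2 * 1 * E" by (rule abs_prod3[OF ga cs(1) h(1)])
  have t2: "\<bar>C/a * sin p * cosh A\<bar> \<le> 1/(2*a^2) * 1 * E" by (rule abs_prod3[OF Ca cs(2) h(2)])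
  have g1: "\<bar>g/a - 1\<bar> \<le> 2"
  proof -
    have q: "\<bar>g/a\<bar> \<le> 1/4" using ga ia by linarith
    have "\<bar>g/a - 1\<bar> \<le> \<bar>g/a\<bar> + \<bar>1\<bar>" by (rule abs_triangle_ineq4)
    moreover have "\<bar>1::real\<bar> = 1" by simp
    ultimately show ?thesis using q by linarith
  qed
  have t3: "\<bar>C/a*(g/a - 1)*cos p*cosh A\<bar> \<le> (1/(2*a^2)*2) * 1 * E"
  proof -
    have "\<bar>C/a*(g/a - 1)\<bar> \<le> 1/(2*a^2)*2" unfolding abs_mult
      using Ca g1 by (intro mult_mono) auto
    then show ?thesis by (rule abs_prod3[OF _ cs(1) h(2)])
  qed
  have C2: "\<bar>C^2/a\<bar> \<le> 1/a"
  proof -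
    have "C*4 \<le> C*(2*a)" using C a by (intro mult_left_mono) auto
    moreover have "C*(2*a) \<le> 1" using C(2) a0 by (simp add: field_simps)
    ultimately have "C \<le> 1" using C by linarith
    then have "C^2 \<le> 1" using C by (simp add: power_le_one)
    then show ?thesis using a0 C by (simp add: abs_divide divide_right_mono)
  qed
  have t4: "\<bar>1/a*(C^2/a + g)* sin p* sinh A\<bar> \<le> (1/a*(2/a)) * 1 * E"
  proof -
    have "\<bar>C^2/a + g\<bar> \<le> \<bar>C^2/a\<bar> + \<bar>g\<bar>" by (rule abs_triangle_ineq)
    then have "\<bar>C^2/a + g\<bar> \<le> 2/a" using C2 g by simp
    then have "\<bar>1/a*(C^2/a + g)\<bar> \<le> 1/a*(2/a)" unfolding abs_mult using a0 by (intro mult_mono) auto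
    then show ?thesis by (rule abs_prod3[OF _ cs(2) h(1)])
  qed
  define X1 where "X1 = \<bar>g/a * cos p * sinh A - C/a * sin p * cosh A\<bar>"
  define X2 where "X2 = \<bar>C/a*(g/a - 1)*cos p*cosh A - 1/a*(C^2/a + g)* sin p* sinh A\<bar>"
  define R1 where "R1 = 1/a^2 * 1 * E + 1/(2*a^2) * 1 * E"
  define R2 where "R2 = (1/(2*a^2)*2) * 1 * E + (1/a*(2/a)) * 1 * E"
  define K where "K = 5*E/a^2"
  have "X1 \<le> R1" unfolding X1_def R1_def using t1 t2 abs_triangle_ineq4 by (smt (verit))
  moreover have "X2 \<le> R2" unfolding X2_def R2_def using t3 t4 abs_triangle_ineq4 by (smt (verit))
  moreover have "R1 + R2 = 4.5 * E / a^2"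
    unfolding R1_def R2_def using a0 by (simp add: field_simps power2_eq_square)
  moreover have "4.5 * E / a^2 \<le> K" unfolding K_def
    by (rule divide_right_mono) (auto simp: E_def)
  ultimately have "X1 + X2 \<le> K" by linarith
  then show ?thesis unfolding X1_def X2_def K_def E_def .
qed




context fixes a :: real assumes a: "2 \<le> a"
begin

lemma dG_bound: "\<bar>dG a u\<bar> \<le> 1/a"
proof -
  define S where "S = SS a (phi a u)"
  define y where "y = (cos (phi a u))^2"
  have S: "1 \<le> S" unfolding S_def by (rule SS_bounds(1)[OF a])
  have y: "0 \<le> y" "y \<le> 1" unfolding y_def by (rule cos_sq_bounds)+
  have C: "0 < Ct a" "Ct a \<le> 1/(2*a)" using Ct_props[OF a] by auto
  have C1: "Ct a \<le> 1"
  proof -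
    have "1/(2*a) \<le> 1" using a by simp
    then show ?thesis using C by linarith
  qed
  have C2: "(Ct a)^2 \<le> 1" using C C1 by (simp add: power_le_one)
  have n1: "(Ct a)^2 * y \<le> 1" using C2 y by (simp add: mult_le_one)
  have n0: "0 \<le> (Ct a)^2 * y" using y by simp
  have c: "0 \<le> cT a" "cT a \<le> 1" using cT_bounds[OF a] by auto
  have N: "\<bar>(Ct a)^2 * y - cT a\<bar> \<le> 1" using n1 n0 c by linarith
  have D: "a \<le> a + S" using S by simp
  have "\<bar>dG a u\<bar> = \<bar>(Ct a)^2 * y - cT a\<bar> / (a + S)"
    unfolding dG_eq[OF a] S_def[symmetric] y_def[symmetric] using S a by (simp add: abs_divide)
  also have "\<dots> \<le> 1 / a" using N D a by (intro frac_le) auto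
  finally show ?thesis .
qed

lemma point_bound:
  assumes mem: "(x1, 0, x3) \<in> Ccal a"
  shows "\<bar>x1\<bar> + \<bar>x3\<bar> \<le> 5*exp (8*pi)/a^2"
proof -
  obtain u v where uv: "X a (u, v) = (x1, 0, x3)" using mem unfolding Ccal_def by auto
  define C where "C = Ct a"
  define g where "g = dG a u"
  define p where "p = phi a u"
  define A where "A = a * v + beta a u"
  define E1 where "E1 = g/a * cos p * sinh A - C/a * sin p * cosh A"
  have e: "x1 = E1" "C * v - G a u = 0"
     "x3 = - (E1 * (C * v - G a u)) / 2 + C/a * (g/a - 1) * cos p * cosh A
           - 1/a * (C^2/a + g) * sin p * sinh A"
    using uv unfolding X_def Let_def E1_def C_def g_def p_def A_def by auto
  have Cp: "0 < C" unfolding C_def using Ct_props(1)[OF a] .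
  have vG: "v = G a u / C" using e(2) Cp by (simp add: field_simps)
  have "A = Ah a u" unfolding A_def Ah_def vG C_def by simp
  then have Ab: "\<bar>A\<bar> \<le> 8*pi" using Ah_eq[OF a, of u] prim_rr_bound[OF a, of "phi a u"] by simp
  have x3: "x3 = C/a * (g/a - 1) * cos p * cosh A - 1/a * (C^2/a + g) * sin p * sinh A"
    using e(3) e(2) by simp
  have "\<bar>E1\<bar> + \<bar>C/a * (g/a - 1) * cos p * cosh A - 1/a * (C^2/a + g) * sin p * sinh A\<bar>
      \<le> 5*exp (8*pi)/a^2"
    unfolding E1_def
    by (rule generic_bound[OF a _ _ _ Ab]) (use Ct_props[OF a] dG_bound in \<open>auto simp: C_def g_def\<close>)
  then show ?thesis using e(1) x3 by simp
qed

end

theorem lemma6p2: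
  shows "(\<forall>\<^sub>F \<alpha> in at_top. bdd_above {\<bar>x1\<bar> + \<bar>x3\<bar> | x1 x3. (x1, 0, x3) \<in> Ccal \<alpha>}) \<and>
         ((\<lambda>\<alpha>. Sup {\<bar>x1\<bar> + \<bar>x3\<bar> | x1 x3. (x1, 0, x3) \<in> Ccal \<alpha>}) \<longlongrightarrow> 0) at_top"
proof -
  define Sset where "Sset \<alpha> = {\<bar>x1\<bar> + \<bar>x3\<bar> | x1 x3. (x1, 0, x3) \<in> Ccal \<alpha>}" for \<alpha>
  define K where "K = 5*exp (8*pi)"
  have props: "bdd_above (Sset \<alpha>) \<and> 0 \<le> Sup (Sset \<alpha>) \<and> Sup (Sset \<alpha>) \<le> K/\<alpha>^2" if a: "2 \<le> \<alpha>" for \<alpha>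
  proof -
    have ub: "z \<le> K/\<alpha>^2" if "z \<in> Sset \<alpha>" for z
      using that point_bound[OF a] unfolding Sset_def K_def by auto
    then have bdd: "bdd_above (Sset \<alpha>)" unfolding bdd_above_def by blast
    define p where "p = fst (X \<alpha> (0,0))"
    define q where "q = snd (snd (X \<alpha> (0,0)))"
    have "fst (snd (X \<alpha> (0,0))) = 0" by (simp add: X_def Let_def G_props(1)[OF a])
    then have "X \<alpha> (0,0) = (p, 0, q)" unfolding p_def q_def by (metis prod.collapse)
    then have "(p, 0, q) \<in> Ccal \<alpha>" unfolding Ccal_def by (metis rangeI)
    then have mem: "\<bar>p\<bar> + \<bar>q\<bar> \<in> Sset \<alpha>" unfolding Sset_def by blast
    then have ne: "Sset \<alpha> \<noteq> {}" by auto
    have "\<bar>p\<bar> + \<bar>q\<bar> \<le> Sup (Sset \<alpha>)" by (rule cSup_upper[OF mem bdd])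
    then have "0 \<le> Sup (Sset \<alpha>)" by linarith
    moreover have "Sup (Sset \<alpha>) \<le> K/\<alpha>^2" by (rule cSup_least[OF ne ub])
    ultimately show ?thesis using bdd by blast
  qed
  have ev: "\<forall>\<^sub>F \<alpha> in at_top. (2::real) \<le> \<alpha>" by (rule eventually_ge_at_top)
  have lim: "((\<lambda>\<alpha>::real. K / \<alpha>^2) \<longlongrightarrow> 0) at_top"
    by (rule tendsto_divide_0[OF tendsto_const])
       (rule filterlim_at_top_imp_at_infinity[OF filterlim_pow_at_top[OF _ filterlim_ident]], simp)
  have "((\<lambda>\<alpha>. Sup (Sset \<alpha>)) \<longlongrightarrow> 0) at_top"
  proof (rule tendsto_sandwich[OF _ _ tendsto_const lim])
    show "\<forall>\<^sub>F n in at_top. 0 \<le> Sup (Sset n)" using ev by eventually_elim (use props in auto)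
    show "\<forall>\<^sub>F n in at_top. Sup (Sset n) \<le> K / n^2" using ev by eventually_elim (use props in auto)
  qed
  moreover have "\<forall>\<^sub>F \<alpha> in at_top. bdd_above (Sset \<alpha>)" using ev by eventually_elim (use props in auto)
  ultimately show ?thesis unfolding Sset_def by simp
qed


end
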